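(* Let $f=(f_1,\dots,f_m):\mathbb{R}^n\times\mathbb{R}^m\to\mathbb{R}^m$ be continuous, $R\subset\mathbb{R}^n$ a rectangle, $I=\prod_{i=1}^mI_i$ with compact intervals $I_i$, and $\phi$ a permutation of $\{1,\dots,m\}$. Suppose there are continuous functions $h_i:R\times I_1\times\cdots\times I_{i-1}\to I_i$ ($i=1,\dots,m$) with the following property: for each $i$ and each $(x,y_1,\dots,y_{i-1})\in R\times I_1\times\cdots\times I_{i-1}$, the value $y_i=h_i(x,y_1,\dots,y_{i-1})$ is the unique $y_i\in I_i$ such that $f_{\phi(i)}(x,Y_1,\dots,Y_m)=0$, where $Y_k=y_k$ for $k\le i$ and $Y_k=h_k(x,Y_1,\dots,Y_{k-1})$ for $k=i+1,\dots,m$. Then for every $x\in R$ there is a unique $y\in I$ with $f(x,y)=0$, and the resulting function $g=(g_1,\dots,g_m):R\to I$ is continuous and given by $$g_1(x)=h_1(x),\quad g_2(x)=h_2(x,g_1(x)),\quad\dots,\quad g_m(x)=h_m(x,g_1(x),\dots,g_{m-1}(x)).$$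
   Context: A rectangle in $\mathbb{R}^n$ is a Cartesian product of $n$ compact intervals. (In the paper, such $h_i$ arise from Assumption 2: for each $i$, the map $y_i\mapsto\operatorname{sign}f_{\phi(i)}(x,Y_1,\dots,Y_m)$ has exactly one jump discontinuity on $I_i$, where $\operatorname{sign}(t)=1$ for $t\ge0$ and $-1$ otherwise.) *)

theory Defs
  imports "HOL-Analysis.Analysis"
begin

(* Conventions: coordinates of R^m are indexed 0..m-1 (paper's index i+1 is our i).
   A point y of R^m is represented as y :: nat => real that is zero at indices >= m;
   nat => real carries the product topology (HOL-Analysis Function_Topology).
   A point (y_1,...,y_{i-1}) of I_1 x ... x I_{i-1} is a function zero at indices >= i. *)

definition boxI :: "(nat \<Rightarrow> real) \<Rightarrow> (nat \<Rightarrow> real) \<Rightarrow> nat \<Rightarrow> (nat \<Rightarrow> real) set" where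
  "boxI lo hi i = {y. (\<forall>k<i. y k \<in> {lo k..hi k}) \<and> (\<forall>k\<ge>i. y k = 0)}"

definition zeroext :: "nat \<Rightarrow> (nat \<Rightarrow> real) set" where
  "zeroext m = {y. \<forall>k\<ge>m. y k = 0}"

(* completion Y of (y_0,...,y_i): after k steps, coordinates < k are filled, rest 0.
   Y k = y k for k <= i, Y k = h k x (Y_0..Y_{k-1}) for k > i. *)
primrec complete ::
  "(nat \<Rightarrow> 'a \<Rightarrow> (nat \<Rightarrow> real) \<Rightarrow> real) \<Rightarrow> nat \<Rightarrow> 'a \<Rightarrow> (nat \<Rightarrow> real) \<Rightarrow> nat \<Rightarrow> (nat \<Rightarrow> real)" where
  "complete h i x y 0 = (\<lambda>k. 0)"
| "complete h i x y (Suc k) =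
     (complete h i x y k)(k := (if k \<le> i then y k else h k x (complete h i x y k)))"

end

theory Submission
  imports Defs
begin

primrec gen :: "(nat \<Rightarrow> 'a \<Rightarrow> (nat \<Rightarrow> real) \<Rightarrow> real) \<Rightarrow> 'a \<Rightarrow> nat \<Rightarrow> (nat \<Rightarrow> real)" where
  "gen h x 0 = (\<lambda>k. 0)"
| "gen h x (Suc n) = (gen h x n)(n := h n x (gen h x n))"

lemma gen_val: "gen h x n k = (if k < n then h k x (gen h x k) else 0)"
  by (induction n) auto

lemma gen_restrict: "i \<le> n \<Longrightarrow> gen h x i = (\<lambda>k. if k < i then gen h x n k else 0)"
  by (auto simp: gen_val)

lemma complete_gen:
  assumes "\<forall>k\<le>i. Y k = gen h x (Suc i) k"
  shows "complete h i x Y n = gen h x n"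
proof (induction n)
  case 0 then show ?case by simp
next
  case (Suc n)
  show ?case
  proof (cases "n \<le> i")
    case True
    then have "Y n = h n x (gen h x n)" using assms gen_val[of h x "Suc i" n] by auto
    then show ?thesis using Suc True by simp
  next
    case False then show ?thesis using Suc by simp
  qed
qed

lemma complete_y:
  assumes "\<forall>k\<le>i. Y k = y k"
    and "\<forall>k. i < k \<and> k < m \<longrightarrow> y k = h k x (\<lambda>j. if j < k then y j else 0)"
    and "n \<le> m"
  shows "complete h i x Y n = (\<lambda>j. if j < n then y j else 0)"
  using assms(3)
proof (induction n)
  case 0 then show ?case by simp
next
  case (Suc n)
  then have IH: "complete h i x Y n = (\<lambda>j. if j < n then y j else 0)" by simp
  show ?case
  proof (cases "n \<le> i")
    case True
    then show ?thesis using IH assms(1) by (auto simp: fun_eq_iff)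
  next
    case False
    then have "y n = h n x (\<lambda>j. if j < n then y j else 0)" using assms(2) Suc.prems by auto
    then show ?thesis using False by (simp add: IH) (auto simp: fun_eq_iff)
  qed
qed

theorem lemma5p1:
  fixes f :: "nat \<Rightarrow> 'a::euclidean_space \<Rightarrow> (nat \<Rightarrow> real) \<Rightarrow> real"
    and h :: "nat \<Rightarrow> 'a \<Rightarrow> (nat \<Rightarrow> real) \<Rightarrow> real"
    and a b :: 'a and lo hi :: "nat \<Rightarrow> real" and m :: nat and phi :: "nat \<Rightarrow> nat"
  assumes f_cont: "\<forall>j<m. continuous_on (UNIV \<times> zeroext m) (\<lambda>(x, y). f j x y)"
    and phi: "bij_betw phi {..<m} {..<m}"
    and h_cont: "\<forall>i<m. continuous_on (cbox a b \<times> boxI lo hi i) (\<lambda>(x, y). h i x y)"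
    and h_range: "\<forall>i<m. \<forall>x\<in>cbox a b. \<forall>y\<in>boxI lo hi i. h i x y \<in> {lo i..hi i}"
    and h_unique: "\<forall>i<m. \<forall>x\<in>cbox a b. \<forall>y\<in>boxI lo hi i. \<forall>t\<in>{lo i..hi i}.
                     f (phi i) x (complete h i x (y(i := t)) m) = 0 \<longleftrightarrow> t = h i x y"
  shows "\<exists>g. continuous_on (cbox a b) g \<and>
           (\<forall>x\<in>cbox a b. g x \<in> boxI lo hi m \<and> (\<forall>j<m. f j x (g x) = 0) \<and>
              (\<forall>y\<in>boxI lo hi m. (\<forall>j<m. f j x y = 0) \<longrightarrow> y = g x) \<and>
              (\<forall>i<m. g x i = h i x (\<lambda>k. if k < i then g x k else 0)))"
proof -
  have box: "x \<in> cbox a b \<Longrightarrow> n \<le> m \<Longrightarrow> gen h x n \<in> boxI lo hi n" for x n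
  proof (induction n)
    case 0 then show ?case by (simp add: boxI_def)
  next
    case (Suc n)
    then have "gen h x n \<in> boxI lo hi n" by simp
    moreover have "h n x (gen h x n) \<in> {lo n..hi n}" using h_range Suc.prems calculation by auto
    ultimately show ?case by (auto simp: boxI_def less_Suc_eq)
  qed
  have cont: "n \<le> m \<Longrightarrow> continuous_on (cbox a b) (\<lambda>x. gen h x n)" for n
  proof (induction n)
    case 0 then show ?case by simp
  next
    case (Suc n)
    then have c1: "continuous_on (cbox a b) (\<lambda>x. gen h x n)" by simp
    have c2: "continuous_on (cbox a b) (\<lambda>x. h n x (gen h x n))"
    proof -
      have "continuous_on (cbox a b) (\<lambda>x. (\<lambda>(x, y). h n x y) (x, gen h x n))"
        apply (rule continuous_on_compose2[OF h_cont[rule_format, of n]])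
        using Suc.prems apply simp
         apply (intro continuous_on_Pair continuous_on_id c1)
        using box Suc.prems by auto
      then show ?thesis by simp
    qed
    show ?case
    proof (rule continuous_on_coordinatewise_then_product)
      fix i
      show "continuous_on (cbox a b) (\<lambda>x. gen h x (Suc n) i)"
      proof (cases "i = n")
        case True then show ?thesis using c2 by simp
      next
        case False
        then have "(\<lambda>x. gen h x (Suc n) i) = (\<lambda>x. gen h x n i)" by auto
        then show ?thesis using continuous_on_product_then_coordinatewise[OF c1, of i] by metis
      qed
    qed
  qed
  show ?thesis
  proof (intro exI[of _ "\<lambda>x. gen h x m"] conjI ballI allI impI)
    show "continuous_on (cbox a b) (\<lambda>x. gen h x m)" using cont by simp
  next
    fix x assume x: "x \<in> cbox a b"
    show "gen h x m \<in> boxI lo hi m" using box x by simp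
  next
    fix x j assume x: "x \<in> cbox a b" and j: "j < m"
    obtain i where i: "i < m" "phi i = j" using phi j by (metis bij_betw_iff_bijections lessThan_iff)
    have "complete h i x ((gen h x i)(i := h i x (gen h x i))) m = gen h x m"
      by (rule complete_gen) (auto simp: gen_val)
    then show "f j x (gen h x m) = 0"
      using h_unique[rule_format, OF i(1) x box[OF x, of i], of "h i x (gen h x i)"]
        h_range[rule_format, OF i(1) x box[OF x, of i]] i by auto
  next
    fix x i assume x: "x \<in> cbox a b" and i: "i < m"
    show "gen h x m i = h i x (\<lambda>k. if k < i then gen h x m k else 0)"
      using gen_val[of h x m i] gen_restrict[of i m h x] i by simp
  next
    fix x y assume x: "x \<in> cbox a b" and y: "y \<in> boxI lo hi m" and z: "\<forall>j<m. f j x y = 0"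
    have yz: "\<forall>k\<ge>m. y k = 0" using y by (simp add: boxI_def)
    have yr: "y = (\<lambda>j. if j < m then y j else 0)" using yz by (auto simp: fun_eq_iff)
    have down: "\<forall>k. m - d \<le> k \<and> k < m \<longrightarrow> y k = h k x (\<lambda>j. if j < k then y j else 0)" for d
    proof (induction d)
      case 0 then show ?case by auto
    next
      case (Suc d)
      show ?case
      proof (cases "d < m")
        case False then show ?thesis using Suc by auto
      next
        case True
        define i where "i = m - Suc d"
        have i: "i < m" using True i_def by simp
        have md: "m - d = Suc i" using True i_def by simp
        define y' where "y' = (\<lambda>j. if j < i then y j else (0::real))"
        have y'b: "y' \<in> boxI lo hi i" using y i by (auto simp: boxI_def y'_def)
        have yi: "y i \<in> {lo i..hi i}" using y i by (auto simp: boxI_def)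
        have "complete h i x (y'(i := y i)) m = (\<lambda>j. if j < m then y j else 0)"
          by (rule complete_y[where m=m]) (use Suc.IH md in \<open>auto simp: y'_def\<close>)
        then have "f (phi i) x (complete h i x (y'(i := y i)) m) = 0"
          using z yr phi i by (metis bij_betw_apply lessThan_iff)
        then have "y i = h i x y'"
          using h_unique[rule_format, OF i x y'b yi] by simp
        then show ?thesis using Suc.IH md i_def y'_def
          by (metis Suc_leI le_eq_less_or_eq)
      qed
    qed
    have all: "\<forall>k<m. y k = h k x (\<lambda>j. if j < k then y j else 0)" using down[of m] by auto
    have "n \<le> m \<Longrightarrow> gen h x n = (\<lambda>j. if j < n then y j else 0)" for n
    proof (induction n)
      case 0 then show ?case by simp
    next
      case (Suc n)
      then have IH: "gen h x n = (\<lambda>j. if j < n then y j else 0)" by simp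
      show ?case using all Suc.prems by (simp add: IH) (auto simp: fun_eq_iff)
    qed
    then show "y = gen h x m" using yr by simp
  qed
qed

end
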